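(* Let $b\ge 1$ be an integer and let $a_1<a_2<\dots<a_l$ be integers with $l\ge 2$ such that $a_{i+1}-a_i\le b$ for all $1\le i<l$. Set $A=\{a_1,\dots,a_l\}$. Then for every integer $n>2b^2$, \[ nA=\bigcup_{1\le k<l}\Big((n-2b^2)\{a_k,a_{k+1}\}+2b^2A\Big). \]
   Context: For a subset $A$ of an abelian group and a positive integer $n$, $nA=A+A+\dots+A$ ($n$ summands) denotes the $n$-fold sumset $\{c_1+\dots+c_n : c_i\in A\}$ (repetitions allowed); sums of sets are Minkowski sums $X+Y=\{x+y: x\in X, y\in Y\}$. *)

theory Defs
  imports Main
begin

definition msum :: "int set \<Rightarrow> int set \<Rightarrow> int set" where
  "msum X Y = {x + y | x y. x \<in> X \<and> y \<in> Y}"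

definition nfold :: "nat \<Rightarrow> int set \<Rightarrow> int set" where
  "nfold n A = {sum_list cs | cs. length cs = n \<and> set cs \<subseteq> A}"

end

theory Submission imports Defs begin

lemma two_seq_aux:
  fixes f g :: "nat \<Rightarrow> int" and b :: nat
  assumes f: "\<And>t. t < b \<Longrightarrow> 1 \<le> f t \<and> f t \<le> int b"
    and g: "\<And>t. t < b \<Longrightarrow> 1 \<le> g t \<and> g t \<le> int b"
    and b1: "b \<ge> 1"
    and le: "sum f {0..<b} \<le> sum g {0..<b}"
  shows "\<exists>i1 i2 j1 j2. i1 < i2 \<and> i2 \<le> b \<and> j1 < j2 \<and> j2 \<le> b \<and> sum f {i1..<i2} = sum g {j1..<j2}"
proof -
  define F where "F i = sum f {0..<i}" for i
  define G where "G j = sum g {0..<j}" for j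
  have Fd: "F i' - F i = sum f {i..<i'}" if "i \<le> i'" for i i'
    unfolding F_def using sum.atLeastLessThan_concat[of 0 i i' f] that by simp
  have Gd: "G i' - G i = sum g {i..<i'}" if "i \<le> i'" for i i'
    unfolding G_def using sum.atLeastLessThan_concat[of 0 i i' g] that by simp
  have Fpos: "F i < F i'" if "i < i'" "i' \<le> b" for i i'
  proof -
    have "0 < sum f {i..<i'}"
    proof (rule sum_pos)
      fix t assume "t \<in> {i..<i'}"
      then have "t < b" using that by auto
      then show "0 < f t" using f[of t] by linarith
    qed (use that in auto)
    with Fd[of i i'] that show ?thesis by simp
  qed
  have Fmono: "F i \<le> F i'" if "i \<le> i'" "i' \<le> b" for i i'
    using Fpos[of i i'] that by (cases "i = i'") auto
  have Gmono: "G i \<le> G i'" if "i \<le> i'" "i' \<le> b" for i i'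
  proof -
    have "0 \<le> sum g {i..<i'}"
    proof (rule sum_nonneg)
      fix t assume "t \<in> {i..<i'}"
      then have "t < b" using that by auto
      then show "0 \<le> g t" using g[of t] by linarith
    qed
    with Gd[of i i'] that show ?thesis by simp
  qed
  have Gstep: "G (Suc j) \<le> G j + int b" if "j < b" for j
    using g[OF that] unfolding G_def by simp
  have ex: "\<exists>j. j \<le> b \<and> G j \<le> F i \<and> F i - G j < int b" if "i \<le> b" for i
  proof -
    define S where "S = {j. j \<le> b \<and> G j \<le> F i}"
    have "0 \<in> S" using Fmono[of 0 i] that by (simp add: S_def F_def G_def)
    have fin: "finite S" unfolding S_def by simp
    define j where "j = Max S"
    have jS: "j \<in> S" using fin \<open>0 \<in> S\<close> j_def Max_in by blast
    show ?thesis
    proof (cases "j = b")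
      case True
      have "F i \<le> F b" using Fmono that by simp
      also have "\<dots> \<le> G b" using le by (simp add: F_def G_def)
      finally have "F i \<le> G j" using True by simp
      moreover have "j \<le> b" "G j \<le> F i" using jS S_def by auto
      ultimately show ?thesis using b1 by auto
    next
      case False
      then have jb: "j < b" using jS S_def by auto
      have "Suc j \<notin> S" using Max_ge[OF fin, of "Suc j"] j_def by auto
      then have "F i < G (Suc j)" using jb S_def by auto
      then show ?thesis using Gstep[OF jb] jS S_def by auto
    qed
  qed
  then have "\<forall>i\<in>{0..b}. \<exists>j. j \<le> b \<and> G j \<le> F i \<and> F i - G j < int b" by auto
  from bchoice[OF this] obtain J where J0: "\<forall>i\<in>{0..b}. J i \<le> b \<and> G (J i) \<le> F i \<and> F i - G (J i) < int b"
    by blast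
  have J: "J i \<le> b \<and> G (J i) \<le> F i \<and> F i - G (J i) < int b" if "i\<in>{0..b}" for i
    using J0 that by blast
  define d where "d i = F i - G (J i)" for i
  have dimg: "d ` {0..b} \<subseteq> {0..<int b}"
  proof
    fix x assume "x \<in> d ` {0..b}"
    then obtain i where "i \<in> {0..b}" "x = d i" by blast
    then show "x \<in> {0..<int b}" using J[of i] d_def by simp
  qed
  have "\<not> inj_on d {0..b}"
  proof
    assume "inj_on d {0..b}"
    then have "card (d ` {0..b}) = Suc b" by (simp add: card_image)
    moreover have "card (d ` {0..b}) \<le> card {0..<int b}" by (rule card_mono) (use dimg in auto)
    ultimately show False by simp
  qed
  then obtain i i' where ii: "i \<in> {0..b}" "i' \<in> {0..b}" "i \<noteq> i'" "d i = d i'"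
    unfolding inj_on_def by blast
  have main: "\<exists>i1 i2 j1 j2. i1 < i2 \<and> i2 \<le> b \<and> j1 < j2 \<and> j2 \<le> b \<and> sum f {i1..<i2} = sum g {j1..<j2}"
    if "i < i'" "i' \<le> b" "d i = d i'" for i i'
  proof -
    have Ji: "J i \<le> b" "J i' \<le> b" using J that by auto
    have "F i < F i'" using Fpos that by simp
    then have eq: "G (J i') - G (J i) = F i' - F i" using that d_def by simp
    have "J i < J i'"
    proof (rule ccontr)
      assume "\<not> J i < J i'"
      then have "G (J i') \<le> G (J i)" using Gmono Ji by simp
      with eq \<open>F i < F i'\<close> show False by simp
    qed
    moreover have "sum f {i..<i'} = sum g {J i..<J i'}"
      using Fd[of i i'] Gd[of "J i" "J i'"] eq that \<open>J i < J i'\<close> by simp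
    ultimately have "i < i' \<and> i' \<le> b \<and> J i < J i' \<and> J i' \<le> b \<and> sum f {i..<i'} = sum g {J i..<J i'}"
      using that Ji by simp
    then show ?thesis
      by (rule exI[where x=i, OF exI[where x=i', OF exI[where x="J i", OF exI[where x="J i'"]]]])
  qed
  show ?thesis
  proof (cases "i < i'")
    case True then show ?thesis by (rule main) (use ii in auto)
  next
    case False then have "i' < i" using ii by simp
    then show ?thesis by (rule main[of i' i]) (use ii in auto)
  qed
qed

lemma two_seq:
  fixes f g :: "nat \<Rightarrow> int" and b :: nat
  assumes f: "\<And>t. t < b \<Longrightarrow> 1 \<le> f t \<and> f t \<le> int b"
    and g: "\<And>t. t < b \<Longrightarrow> 1 \<le> g t \<and> g t \<le> int b"
    and b1: "b \<ge> 1"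
  shows "\<exists>i1 i2 j1 j2. i1 < i2 \<and> i2 \<le> b \<and> j1 < j2 \<and> j2 \<le> b \<and> sum f {i1..<i2} = sum g {j1..<j2}"
proof (cases "sum f {0..<b} \<le> sum g {0..<b}")
  case True show ?thesis by (rule two_seq_aux[OF f g b1 True])
next
  case False
  then have "sum g {0..<b} \<le> sum f {0..<b}" by simp
  have "\<exists>i1 i2 j1 j2. i1 < i2 \<and> i2 \<le> b \<and> j1 < j2 \<and> j2 \<le> b \<and> sum g {i1..<i2} = sum f {j1..<j2}"
    by (rule two_seq_aux[where f=g and g=f]) (use assms(1,2) b1 \<open>sum g {0..<b} \<le> sum f {0..<b}\<close> in auto)
  then obtain j1 j2 i1 i2 where
    h: "j1 < j2 \<and> j2 \<le> b \<and> i1 < i2 \<and> i2 \<le> b \<and> sum g {j1..<j2} = sum f {i1..<i2}"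
    by (elim exE)
  then have "i1 < i2 \<and> i2 \<le> b \<and> j1 < j2 \<and> j2 \<le> b \<and> sum f {i1..<i2} = sum g {j1..<j2}" by simp
  then show ?thesis
    by (rule exI[where x=i1, OF exI[where x=i2, OF exI[where x=j1, OF exI[where x=j2]]]])
qed

lemma improve:
  fixes A :: "int set" and c :: "nat \<Rightarrow> int" and M :: int and b n :: nat
  assumes gup: "\<And>x. x \<in> A \<Longrightarrow> x < M \<Longrightarrow> \<exists>x'. x' \<in> A \<and> x < x' \<and> x' \<le> M \<and> x' - x \<le> int b"
    and gdn: "\<And>y. y \<in> A \<Longrightarrow> M < y \<Longrightarrow> \<exists>y'. y' \<in> A \<and> M \<le> y' \<and> y' < y \<and> y - y' \<le> int b"
    and b1: "b \<ge> 1"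
    and cA: "\<And>i. i < n \<Longrightarrow> c i \<in> A"
    and lo: "b \<le> card {i\<in>{0..<n}. c i < M}"
    and hi: "b \<le> card {i\<in>{0..<n}. M < c i}"
  shows "\<exists>c'. (\<forall>i<n. c' i \<in> A) \<and> sum c' {0..<n} = sum c {0..<n}
           \<and> (\<Sum>i\<in>{0..<n}. (c' i)^2) < (\<Sum>i\<in>{0..<n}. (c i)^2)"
proof -
  define up where "up x = (SOME x'. x' \<in> A \<and> x < x' \<and> x' \<le> M \<and> x' - x \<le> int b)" for x
  define dn where "dn y = (SOME y'. y' \<in> A \<and> M \<le> y' \<and> y' < y \<and> y - y' \<le> int b)" for y
  have up: "up x \<in> A \<and> x < up x \<and> up x \<le> M \<and> up x - x \<le> int b" if "x \<in> A" "x < M" for x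
    unfolding up_def by (rule someI_ex) (rule gup[OF that])
  have dn: "dn y \<in> A \<and> M \<le> dn y \<and> dn y < y \<and> y - dn y \<le> int b" if "y \<in> A" "M < y" for y
    unfolding dn_def by (rule someI_ex) (rule gdn[OF that])
  define Lo where "Lo = {i\<in>{0..<n}. c i < M}"
  define Hi where "Hi = {i\<in>{0..<n}. M < c i}"
  obtain p where p: "p ` {0..<b} \<subseteq> Lo" "inj_on p {0..<b}"
    using card_le_inj[of "{0..<b}" Lo] lo Lo_def by auto
  obtain q where q: "q ` {0..<b} \<subseteq> Hi" "inj_on q {0..<b}"
    using card_le_inj[of "{0..<b}" Hi] hi Hi_def by auto
  define f where "f t = up (c (p t)) - c (p t)" for t
  define g where "g t = c (q t) - dn (c (q t))" for t
  have pt: "p t < n \<and> c (p t) \<in> A \<and> c (p t) < M" if "t < b" for t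
  proof -
    have "p t \<in> Lo" using p(1) that by auto
    then show ?thesis using cA Lo_def by auto
  qed
  have qt: "q t < n \<and> c (q t) \<in> A \<and> M < c (q t)" if "t < b" for t
  proof -
    have "q t \<in> Hi" using q(1) that by auto
    then show ?thesis using cA Hi_def by auto
  qed
  have fb: "1 \<le> f t \<and> f t \<le> int b" if "t < b" for t
    using up[of "c (p t)"] pt[OF that] f_def by auto
  have gb: "1 \<le> g t \<and> g t \<le> int b" if "t < b" for t
    using dn[of "c (q t)"] qt[OF that] g_def by auto
  obtain i1 i2 j1 j2 where ij: "i1 < i2" "i2 \<le> b" "j1 < j2" "j2 \<le> b"
    and seq: "sum f {i1..<i2} = sum g {j1..<j2}"
  proof -
    from two_seq[of b f g] fb gb b1 obtain i1 i2 j1 j2 where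
      "i1 < i2 \<and> i2 \<le> b \<and> j1 < j2 \<and> j2 \<le> b \<and> sum f {i1..<i2} = sum g {j1..<j2}"
      by presburger
    then show ?thesis using that by blast
  qed
  define I where "I = p ` {i1..<i2}"
  define J where "J = q ` {j1..<j2}"
  have injI: "inj_on p {i1..<i2}" by (rule inj_on_subset[OF p(2)]) (use ij in auto)
  have injJ: "inj_on q {j1..<j2}" by (rule inj_on_subset[OF q(2)]) (use ij in auto)
  have IL: "I \<subseteq> Lo" using p(1) ij I_def by auto
  have JH: "J \<subseteq> Hi" using q(1) ij J_def by auto
  have LH: "Lo \<inter> Hi = {}" unfolding Lo_def Hi_def by auto
  have disj: "I \<inter> J = {}" using IL JH LH by blast
  have In: "I \<subseteq> {0..<n}" "J \<subseteq> {0..<n}" using IL JH Lo_def Hi_def by auto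
  define c' where "c' i = (if i \<in> I then up (c i) else if i \<in> J then dn (c i) else c i)" for i
  have cI: "c i \<in> A \<and> c i < M" if "i \<in> I" for i using that IL Lo_def cA by auto
  have cJ: "c i \<in> A \<and> M < c i" if "i \<in> J" for i using that JH Hi_def cA by auto
  have c'A: "\<forall>i<n. c' i \<in> A"
    using cI cJ up dn cA c'_def by auto
  have diff: "c' i - c i = (if i \<in> I then up (c i) - c i else 0) - (if i \<in> J then c i - dn (c i) else 0)" for i
    using disj c'_def by auto
  have "sum (\<lambda>i. c' i - c i) {0..<n} = sum (\<lambda>i. up (c i) - c i) I - sum (\<lambda>i. c i - dn (c i)) J"
    unfolding diff sum_subtractf sum.inter_restrict[symmetric, OF finite_atLeastLessThan]
    using In by (simp add: Int_absorb1 Int_absorb2)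
  also have "sum (\<lambda>i. up (c i) - c i) I = sum f {i1..<i2}"
    unfolding I_def sum.reindex[OF injI] f_def by simp
  also have "sum (\<lambda>i. c i - dn (c i)) J = sum g {j1..<j2}"
    unfolding J_def sum.reindex[OF injJ] g_def by simp
  finally have s0: "sum (\<lambda>i. c' i - c i) {0..<n} = 0" using seq by simp
  then have ssum: "sum c' {0..<n} = sum c {0..<n}" by (simp add: sum_subtractf)
  define h where "h i = (c' i - c i) * (c' i + c i - 2 * M)" for i
  have hle: "\<forall>i\<in>{0..<n}. h i \<le> 0"
  proof
    fix i assume "i \<in> {0..<n}"
    show "h i \<le> 0"
    proof (cases "i \<in> I")
      case True
      then have "c i < c' i" "c' i \<le> M" using cI up c'_def by auto
      then show ?thesis unfolding h_def by (intro mult_nonneg_nonpos) auto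
    next
      case False
      show ?thesis
      proof (cases "i \<in> J")
        case True
        then have "c' i < c i" "M \<le> c' i" using cJ dn c'_def disj by auto
        then show ?thesis unfolding h_def by (intro mult_nonpos_nonneg) auto
      qed (use False c'_def h_def in auto)
    qed
  qed
  have "p i1 \<in> I" using ij I_def by auto
  then have hlt: "h (p i1) < 0"
  proof -
    assume "p i1 \<in> I"
    then have "c (p i1) < c' (p i1)" "c' (p i1) \<le> M" using cI up c'_def by auto
    then show ?thesis unfolding h_def by (intro mult_pos_neg) auto
  qed
  have "sum h {0..<n} < sum (\<lambda>_. 0) {0..<n}"
    by (rule sum_strict_mono_ex1) (use hle hlt \<open>p i1 \<in> I\<close> In in auto)
  then have hs: "sum h {0..<n} < 0" by simp
  have pw: "(c' i)^2 = (c i)^2 + h i + 2 * M * (c' i - c i)" for i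
    unfolding h_def by (simp add: power2_eq_square algebra_simps)
  have "(\<Sum>i\<in>{0..<n}. (c' i)^2) = (\<Sum>i\<in>{0..<n}. (c i)^2) + sum h {0..<n} + 2 * M * sum (\<lambda>i. c' i - c i) {0..<n}"
    unfolding pw sum.distrib sum_distrib_left by simp
  with s0 hs have "(\<Sum>i\<in>{0..<n}. (c' i)^2) < (\<Sum>i\<in>{0..<n}. (c i)^2)" by simp
  then show ?thesis using c'A ssum by blast
qed

lemma amono:
  fixes a :: "nat \<Rightarrow> int"
  assumes inc: "\<And>i. 1 \<le> i \<Longrightarrow> i < l \<Longrightarrow> a i < a (Suc i)"
  shows "1 \<le> i \<Longrightarrow> i < j \<Longrightarrow> j \<le> l \<Longrightarrow> a i < a j"
proof (induction j)
  case 0 then show ?case by simp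
next
  case (Suc j)
  show ?case
  proof (cases "i = j")
    case True then show ?thesis using inc Suc.prems by auto
  next
    case False
    then have "a i < a j" using Suc by auto
    also have "a j < a (Suc j)" using inc Suc.prems False by auto
    finally show ?thesis .
  qed
qed

theorem mainTheorem2:
  fixes b :: nat and l :: nat and a :: "nat \<Rightarrow> int" and n :: nat
  assumes "b \<ge> 1"
    and "l \<ge> 2"
    and "\<And>i. 1 \<le> i \<Longrightarrow> i < l \<Longrightarrow> a i < a (Suc i)"
    and "\<And>i. 1 \<le> i \<Longrightarrow> i < l \<Longrightarrow> a (Suc i) - a i \<le> int b"
    and "n > 2 * b^2"
  shows "nfold n (a ` {1..l}) =
    (\<Union>k\<in>{1..<l}. msum (nfold (n - 2 * b^2) {a k, a (Suc k)})
                          (nfold (2 * b^2) (a ` {1..l})))"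
proof -
  note b1 = assms(1) and l2 = assms(2) and inc = assms(3) and gap = assms(4) and nb = assms(5)
  define A where "A = a ` {1..l}"
  have lt: "a i < a j" if "1 \<le> i" "i < j" "j \<le> l" for i j using amono[where l=l and a=a, OF inc] that by blast
  have le: "a i \<le> a j" if "1 \<le> i" "i \<le> j" "j \<le> l" for i j
    using lt[of i j] that by (cases "i = j") auto
  have lt_iff: "a i < a j \<longleftrightarrow> i < j" if "i \<in> {1..l}" "j \<in> {1..l}" for i j
  proof
    assume h: "a i < a j"
    show "i < j"
    proof (rule ccontr)
      assume "\<not> i < j"
      then have "a j \<le> a i" using le[of j i] that by auto
      with h show False by simp
    qed
  next
    assume "i < j" then show "a i < a j" using lt that by auto
  qed
  show ?thesis
  proof
    show "(\<Union>k\<in>{1..<l}. msum (nfold (n - 2 * b^2) {a k, a (Suc k)}) (nfold (2 * b^2) (a ` {1..l})))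
          \<subseteq> nfold n (a ` {1..l})"
    proof
      fix s assume "s \<in> (\<Union>k\<in>{1..<l}. msum (nfold (n - 2 * b^2) {a k, a (Suc k)}) (nfold (2 * b^2) (a ` {1..l})))"
      then obtain k cs1 cs2 where k: "k \<in> {1..<l}" and s: "s = sum_list cs1 + sum_list cs2"
        and c1: "length cs1 = n - 2*b^2" "set cs1 \<subseteq> {a k, a (Suc k)}"
        and c2: "length cs2 = 2*b^2" "set cs2 \<subseteq> a ` {1..l}"
        unfolding msum_def nfold_def by blast
      have "{a k, a (Suc k)} \<subseteq> a ` {1..l}" using k by auto
      then have "set (cs1 @ cs2) \<subseteq> a ` {1..l}" using c1 c2 by auto
      moreover have "length (cs1 @ cs2) = n" using c1 c2 nb by simp
      moreover have "s = sum_list (cs1 @ cs2)" using s by simp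
      ultimately show "s \<in> nfold n (a ` {1..l})" unfolding nfold_def by blast
    qed
  next
    show "nfold n (a ` {1..l}) \<subseteq> (\<Union>k\<in>{1..<l}. msum (nfold (n - 2 * b^2) {a k, a (Suc k)}) (nfold (2 * b^2) (a ` {1..l})))"
    proof
      fix s assume "s \<in> nfold n (a ` {1..l})"
      then obtain cs where cs: "length cs = n" "set cs \<subseteq> A" "s = sum_list cs"
        unfolding nfold_def A_def by blast
      define P where "P c \<longleftrightarrow> (\<forall>i<n. c i \<in> A) \<and> sum c {0..<n} = s" for c :: "nat \<Rightarrow> int"
      have "P (\<lambda>i. cs ! i)" using cs unfolding P_def by (auto simp: sum_list_sum_nth)
      then obtain c where Pc: "P c" and cmin: "\<And>c'. P c' \<Longrightarrow> nat (\<Sum>i\<in>{0..<n}. (c i)^2) \<le> nat (\<Sum>i\<in>{0..<n}. (c' i)^2)"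
        using ex_has_least_nat[of P "\<lambda>i. cs ! i" "\<lambda>c. nat (\<Sum>i\<in>{0..<n}. (c i)^2)"] by blast
      have cA: "\<And>i. i < n \<Longrightarrow> c i \<in> A" and csum: "sum c {0..<n} = s" using Pc P_def by auto
      have gup: "\<exists>x'. x' \<in> A \<and> x < x' \<and> x' \<le> M \<and> x' - x \<le> int b" if "x \<in> A" "M \<in> A" "x < M" for x M
      proof -
        have "x \<in> a ` {1..l}" "M \<in> a ` {1..l}" using that A_def by auto
        then obtain i m where im: "i \<in> {1..l}" "m \<in> {1..l}" "x = a i" "M = a m" by blast
        then have im2: "i < m" using lt_iff[of i m] that by simp
        have si: "1 \<le> i" "i < l" using im im2 by auto
        have 1: "a i < a (Suc i)" using inc[OF si] .
        have 2: "a (Suc i) - a i \<le> int b" using gap[OF si] .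
        have 3: "a (Suc i) \<le> a m" using le[of "Suc i" m] si im im2 by simp
        have 4: "a (Suc i) \<in> A" using A_def si by auto
        show ?thesis using 1 2 3 4 im by blast
      qed
      have gdn: "\<exists>y'. y' \<in> A \<and> M \<le> y' \<and> y' < y \<and> y - y' \<le> int b" if "y \<in> A" "M \<in> A" "M < y" for y M
      proof -
        have "y \<in> a ` {1..l}" "M \<in> a ` {1..l}" using that A_def by auto
        then obtain j m where im: "j \<in> {1..l}" "m \<in> {1..l}" "y = a j" "M = a m" by blast
        then have mj: "m < j" using lt_iff[of m j] that by simp
        then have j: "j = Suc (j - 1)" "1 \<le> j - 1" "j - 1 < l" using im by auto
        have 1: "a (j-1) < a (Suc (j-1))" using inc[OF j(2,3)] .
        have 2: "a (Suc (j-1)) - a (j - 1) \<le> int b" using gap[OF j(2,3)] .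
        have 3: "a m \<le> a (j - 1)" using le[of m "j-1"] im mj by simp
        have 4: "a (j-1) \<in> A" using A_def j by auto
        show ?thesis using 1 2 3 4 im j(1) by (metis)
      qed
      have nogood: "card {i\<in>{0..<n}. c i < M} < b \<or> card {i\<in>{0..<n}. M < c i} < b" if MA: "M \<in> A" for M
      proof (rule ccontr)
        assume "\<not> ?thesis"
        then have h1: "b \<le> card {i\<in>{0..<n}. c i < M}" "b \<le> card {i\<in>{0..<n}. M < c i}" by auto
        have "\<exists>c'. (\<forall>i<n. c' i \<in> A) \<and> sum c' {0..<n} = sum c {0..<n}
           \<and> (\<Sum>i\<in>{0..<n}. (c' i)^2) < (\<Sum>i\<in>{0..<n}. (c i)^2)"
          by (rule improve[of A M b n c, OF gup[OF _ MA] gdn[OF _ MA] b1 cA h1])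
        then obtain c' where c': "\<forall>i<n. c' i \<in> A" "sum c' {0..<n} = sum c {0..<n}"
          "(\<Sum>i\<in>{0..<n}. (c' i)^2) < (\<Sum>i\<in>{0..<n}. (c i)^2)" by blast
        then have "P c'" using csum P_def by simp
        from cmin[OF this] have "nat (\<Sum>i\<in>{0..<n}. (c i)^2) \<le> nat (\<Sum>i\<in>{0..<n}. (c' i)^2)" .
        moreover have "0 \<le> (\<Sum>i\<in>{0..<n}. (c' i)^2)" by (simp add: sum_nonneg)
        ultimately show False using c'(3) by simp
      qed
      define Pk where "Pk k = card {i\<in>{0..<n}. c i < a k}" for k
      define Qk where "Qk k = card {i\<in>{0..<n}. a k < c i}" for k
      have cge: "a 1 \<le> c i \<and> c i \<le> a l" if "i < n" for i
      proof -
        have "c i \<in> a ` {1..l}" using cA[OF that] A_def by simp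
        then obtain j where j: "j \<in> {1..l}" "c i = a j" by blast
        then show ?thesis using le[of 1 j] le[of j l] by simp
      qed
      have "{i\<in>{0..<n}. c i < a 1} = {}"
      proof (rule equals0I)
        fix i assume "i \<in> {i\<in>{0..<n}. c i < a 1}"
        then show False using cge[of i] by auto
      qed
      then have P1: "Pk 1 = 0" unfolding Pk_def by simp
      have "{i\<in>{0..<n}. a l < c i} = {}"
      proof (rule equals0I)
        fix i assume "i \<in> {i\<in>{0..<n}. a l < c i}"
        then show False using cge[of i] by auto
      qed
      then have Ql: "Qk l = 0" unfolding Qk_def by simp
      have "\<exists>k. 1 \<le> k \<and> k < l \<and> Pk k < b \<and> Qk (Suc k) < b"
      proof (rule ccontr)
        assume H: "\<not> ?thesis"
        have "1 \<le> k \<longrightarrow> k < l \<longrightarrow> Pk k < b" for k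
        proof (induction k)
          case 0 then show ?case by simp
        next
          case (Suc k)
          show ?case
          proof (cases "k = 0")
            case True then show ?thesis using P1 b1 by simp
          next
            case False
            show ?thesis
            proof (intro impI)
              assume "Suc k < l"
              then have "Pk k < b" using Suc False by simp
              then have "\<not> Qk (Suc k) < b" using H False \<open>Suc k < l\<close> by auto
              moreover have "a (Suc k) \<in> A" using A_def \<open>Suc k < l\<close> by auto
              ultimately show "Pk (Suc k) < b" using nogood[of "a (Suc k)"] Pk_def Qk_def by auto
            qed
          qed
        qed
        then have "Pk (l - 1) < b" using l2 by simp
        moreover have "Suc (l - 1) = l" using l2 by simp
        then have "Qk (Suc (l - 1)) < b" using Ql b1 by simp
        moreover have "1 \<le> l - 1" "l - 1 < l" using l2 by auto
        ultimately show False using H by blast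
      qed
      then obtain k where k: "1 \<le> k" "k < l" "Pk k < b" "Qk (Suc k) < b" by blast
      define Out where "Out = {i\<in>{0..<n}. c i < a k} \<union> {i\<in>{0..<n}. a (Suc k) < c i}"
      have "card Out \<le> Pk k + Qk (Suc k)" unfolding Out_def Pk_def Qk_def by (rule card_Un_le)
      also have "\<dots> < 2 * b" using k by simp
      also have "\<dots> \<le> 2 * b^2" using b1 by (simp add: power2_eq_square)
      finally have cOut: "card Out < 2 * b^2" .
      define In where "In = {0..<n} - Out"
      have "card In = n - card Out" unfolding In_def by (subst card_Diff_subset) (auto simp: Out_def)
      then have "n - 2 * b^2 \<le> card In" using cOut by simp
      then obtain T where T: "T \<subseteq> In" "card T = n - 2 * b^2" "finite T"
        using obtain_subset_with_card_n by metis
      have inpair: "c i \<in> {a k, a (Suc k)}" if "i \<in> In" for i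
      proof -
        have i: "i < n" "\<not> c i < a k" "\<not> a (Suc k) < c i" using that In_def Out_def by auto
        obtain j where j: "j \<in> {1..l}" "c i = a j" using cA[OF i(1)] A_def by auto
        have "\<not> j < k" using lt_iff[of j k] j i k by auto
        moreover have "\<not> Suc k < j" using lt_iff[of "Suc k" j] j i k by auto
        ultimately have "j = k \<or> j = Suc k" by auto
        then show ?thesis using j by auto
      qed
      define R where "R = {0..<n} - T"
      have TIn: "T \<subseteq> {0..<n}" using T In_def by auto
      have cR: "card R = 2 * b^2" unfolding R_def using T TIn nb by (simp add: card_Diff_subset)
      define cs1 where "cs1 = map c (sorted_list_of_set T)"
      define cs2 where "cs2 = map c (sorted_list_of_set R)"
      have 1: "cs1 \<in> {cs. length cs = n - 2 * b^2 \<and> set cs \<subseteq> {a k, a (Suc k)}}"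
        using T inpair unfolding cs1_def by auto
      have 2: "cs2 \<in> {cs. length cs = 2 * b^2 \<and> set cs \<subseteq> a ` {1..l}}"
        using cR cA unfolding cs2_def R_def A_def by auto
      have "sum_list cs1 + sum_list cs2 = sum c T + sum c R"
        unfolding cs1_def cs2_def using T by (simp add: sum_list_distinct_conv_sum_set R_def)
      also have "\<dots> = s" using csum sum.subset_diff[OF TIn, of c] R_def by simp
      finally have "s = sum_list cs1 + sum_list cs2" by simp
      then have "s \<in> msum (nfold (n - 2 * b^2) {a k, a (Suc k)}) (nfold (2 * b^2) (a ` {1..l}))"
        using 1 2 unfolding msum_def nfold_def by blast
      then show "s \<in> (\<Union>k\<in>{1..<l}. msum (nfold (n - 2 * b^2) {a k, a (Suc k)}) (nfold (2 * b^2) (a ` {1..l})))"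
        using k by auto
    qed
  qed
qed
end
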